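(* Let $B$ be a log-product expression of degree $n$ and let $\gamma \geq 1$. Then there exist an integer $m \geq \log (1+n /\gamma)$ and $2m$ homogeneous expressions $P_1, \dots, P_{m} , S_1, \dots, S_{m}$ (possibly equal to $\epsilon$) such that $B \equiv P_1 P_2 \cdots P_{m} S_{m} S_{m-1} \cdots S_1$, $\deg P_i + \deg S_i \geq \gamma$ for all $i \in \{1,\dots,m-1\}$, and $\deg P_{m} +\deg S_{m} \leq \gamma$.
   Context: Regular expressions (without star, without $\emptyset$) are built from $\epsilon$ and letters by union and concatenation; $R\equiv R'$ means they describe the same language. A homogeneous expression describes a language all of whose words have the same length, its degree $\deg R$. A homogeneous expression $B$ is log-product if it is a letter, or there are homogeneous expressions $B_1,B_2$ with $B_1$ log-product, $\deg B_1\ge\deg B_2$ and $B=B_1B_2$ or $B=B_2B_1$. Logarithms are base 2. *)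

theory Defs
  imports Complex_Main
begin

datatype 'a rexp = Eps | Letter 'a | Union "'a rexp" "'a rexp" | Concat "'a rexp" "'a rexp"

fun lang :: "'a rexp \<Rightarrow> 'a list set" where
  "lang Eps = {[]}"
| "lang (Letter a) = {[a]}"
| "lang (Union r s) = lang r \<union> lang s"
| "lang (Concat r s) = {u @ v | u v. u \<in> lang r \<and> v \<in> lang s}"

definition equiv_rexp :: "'a rexp \<Rightarrow> 'a rexp \<Rightarrow> bool" (infix "\<equiv>\<^sub>r" 50) where
  "r \<equiv>\<^sub>r s \<longleftrightarrow> lang r = lang s"

definition homogeneous :: "'a rexp \<Rightarrow> bool" where
  "homogeneous r \<longleftrightarrow> (\<exists>k. \<forall>w\<in>lang r. length w = k)"

text \<open>Degree: the common length of all words (languages are never empty here).\<close>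
definition deg :: "'a rexp \<Rightarrow> nat" where
  "deg r = (THE k. \<forall>w\<in>lang r. length w = k)"

inductive log_product :: "'a rexp \<Rightarrow> bool" where
  letter: "log_product (Letter a)"
| left: "\<lbrakk>log_product B1; homogeneous B1; homogeneous B2; deg B1 \<ge> deg B2\<rbrakk>
          \<Longrightarrow> log_product (Concat B1 B2)"
| right: "\<lbrakk>log_product B1; homogeneous B1; homogeneous B2; deg B1 \<ge> deg B2\<rbrakk>
          \<Longrightarrow> log_product (Concat B2 B1)"

definition prod_rexp :: "'a rexp list \<Rightarrow> 'a rexp" where
  "prod_rexp rs = foldr Concat rs Eps"

end

theory Submission
  imports Defs
begin

definition conc :: "'a list set \<Rightarrow> 'a list set \<Rightarrow> 'a list set" where
  "conc A B = {u @ v | u v. u \<in> A \<and> v \<in> B}"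

lemma lang_Concat': "lang (Concat a b) = conc (lang a) (lang b)"
  by (simp add: conc_def)

lemma conc_assoc[simp]: "conc (conc A B) C = conc A (conc B C)"
  unfolding conc_def by (auto, metis append.assoc, metis append.assoc)

lemma conc_Nil1[simp]: "conc {[]} A = A" unfolding conc_def by auto
lemma conc_Nil2[simp]: "conc A {[]} = A" unfolding conc_def by auto

declare lang.simps(4)[simp del]
declare lang_Concat'[simp]

lemma prod_Nil[simp]: "prod_rexp [] = Eps" by (simp add: prod_rexp_def)
lemma prod_Cons[simp]: "prod_rexp (x # xs) = Concat x (prod_rexp xs)" by (simp add: prod_rexp_def)

lemma lang_prod_append[simp]:
  "lang (prod_rexp (xs @ ys)) = conc (lang (prod_rexp xs)) (lang (prod_rexp ys))"
  by (induction xs) auto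

lemma lang_nonempty: "lang r \<noteq> {}"
proof (induction r)
  case (Concat r s)
  then obtain u v where "u \<in> lang r" "v \<in> lang s" by blast
  then show ?case by (auto simp: conc_def)
qed auto

lemma deg_eq: assumes "homogeneous r" "w \<in> lang r" shows "deg r = length w"
proof -
  obtain k where k: "\<forall>w\<in>lang r. length w = k" using assms(1) homogeneous_def by blast
  have "(THE k. \<forall>w\<in>lang r. length w = k) = k"
    apply (rule the_equality) using k assms(2) by auto
  then show ?thesis using k assms(2) deg_def by metis
qed

lemma hom_Concat:
  assumes "homogeneous a" "homogeneous b"
  shows "homogeneous (Concat a b) \<and> deg (Concat a b) = deg a + deg b"
proof -
  obtain u v where uv: "u \<in> lang a" "v \<in> lang b" using lang_nonempty by blast
  have h: "homogeneous (Concat a b)" unfolding homogeneous_def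
    apply (rule exI[of _ "deg a + deg b"])
  proof
    fix w assume "w \<in> lang (Concat a b)"
    then obtain x y where "w = x @ y" "x \<in> lang a" "y \<in> lang b" by (auto simp: conc_def)
    then show "length w = deg a + deg b" using assms deg_eq[of a x] deg_eq[of b y] by simp
  qed
  moreover have "u @ v \<in> lang (Concat a b)" using uv by (auto simp: conc_def)
  ultimately have "deg (Concat a b) = length u + length v" using deg_eq[OF h] by simp
  then show ?thesis using h deg_eq[OF assms(1) uv(1)] deg_eq[OF assms(2) uv(2)] by simp
qed

lemma hom_Eps[simp]: "homogeneous Eps" "deg Eps = 0"
  using deg_eq[of Eps "[]"] by (auto simp: homogeneous_def)

lemma hom_Letter[simp]: "homogeneous (Letter a)" "deg (Letter a) = 1"
  using deg_eq[of "Letter a" "[a]"] by (auto simp: homogeneous_def)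

lemma lp_hom: "log_product B \<Longrightarrow> homogeneous B"
  by (induction rule: log_product.induct) (auto simp: hom_Concat)

lemma shift:
  assumes "m' \<ge> 1" "\<forall>i\<in>{1..m'}. homogeneous (P' i) \<and> homogeneous (S' i)"
    "lang B1 = lang (prod_rexp (map P' [1..<m'+1] @ map S' (rev [1..<m'+1])))"
    "\<forall>i\<in>{1..<m'}. \<gamma> \<le> real (deg (P' i) + deg (S' i))"
    "real (deg (P' m') + deg (S' m')) \<le> \<gamma>"
    "homogeneous X" "homogeneous Y" "\<gamma> \<le> real (deg X + deg Y)"
  shows "\<exists>P S. (\<forall>i\<in>{1..m'+1}. homogeneous (P i) \<and> homogeneous (S i))
    \<and> lang (Concat X (Concat B1 Y)) = lang (prod_rexp (map P [1..<m'+1+1] @ map S (rev [1..<m'+1+1])))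
    \<and> (\<forall>i\<in>{1..<m'+1}. \<gamma> \<le> real (deg (P i) + deg (S i)))
    \<and> real (deg (P (m'+1)) + deg (S (m'+1))) \<le> \<gamma>"
proof -
  define P where "P = (\<lambda>i. if i = 1 then X else P' (i - 1))"
  define S where "S = (\<lambda>i. if i = 1 then Y else S' (i - 1))"
  have u: "[1..<m'+1+1] = 1 # map Suc [1..<m'+1]"
    by (simp add: upt_conv_Cons map_Suc_upt del: upt_Suc)
  have mp: "map P [1..<m'+1+1] = X # map P' [1..<m'+1]"
  proof -
    have "map (P o Suc) [1..<m'+1] = map P' [1..<m'+1]" by (rule map_cong) (auto simp: P_def)
    then show ?thesis unfolding u by (simp add: P_def)
  qed
  have ms: "map S (rev [1..<m'+1+1]) = map S' (rev [1..<m'+1]) @ [Y]"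
  proof -
    have "map (S o Suc) (rev [1..<m'+1]) = map S' (rev [1..<m'+1])" by (rule map_cong) (auto simp: S_def)
    then show ?thesis unfolding u by (simp add: S_def rev_map)
  qed
  show ?thesis
  proof (intro exI conjI)
    show "\<forall>i\<in>{1..m'+1}. homogeneous (P i) \<and> homogeneous (S i)"
    proof
      fix i assume i: "i \<in> {1..m'+1}"
      show "homogeneous (P i) \<and> homogeneous (S i)"
      proof (cases "i = 1")
        case False
        then have "i - 1 \<in> {1..m'}" using i by auto
        then show ?thesis using assms(2) False by (simp add: P_def S_def)
      qed (use assms(6,7) in \<open>simp add: P_def S_def\<close>)
    qed
    show "lang (Concat X (Concat B1 Y)) = lang (prod_rexp (map P [1..<m'+1+1] @ map S (rev [1..<m'+1+1])))"
      unfolding mp ms using assms(3) by simp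
    show "\<forall>i\<in>{1..<m'+1}. \<gamma> \<le> real (deg (P i) + deg (S i))"
    proof
      fix i assume i: "i \<in> {1..<m'+1}"
      show "\<gamma> \<le> real (deg (P i) + deg (S i))"
      proof (cases "i = 1")
        case False
        then have "i - 1 \<in> {1..<m'}" using i by auto
        then show ?thesis using assms(4) False by (simp add: P_def S_def)
      qed (use assms(8) in \<open>simp add: P_def S_def\<close>)
    qed
    show "real (deg (P (m'+1)) + deg (S (m'+1))) \<le> \<gamma>"
    proof -
      have "m' + 1 \<noteq> 1" using assms(1) by linarith
      then have "P (m'+1) = P' m'" "S (m'+1) = S' m'" unfolding P_def S_def by (simp_all only: if_False) simp_all
      then show ?thesis using assms(5) by simp
    qed
  qed
qed


definition good :: "real \<Rightarrow> 'a rexp \<Rightarrow> nat \<Rightarrow> (nat \<Rightarrow> 'a rexp) \<Rightarrow> (nat \<Rightarrow> 'a rexp) \<Rightarrow> bool" where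
  "good \<gamma> W m P S \<longleftrightarrow> m \<ge> 1 \<and> (\<forall>i\<in>{1..m}. homogeneous (P i) \<and> homogeneous (S i))
    \<and> lang W = lang (prod_rexp (map P [1..<m+1] @ map S (rev [1..<m+1])))
    \<and> (\<forall>i\<in>{1..<m}. \<gamma> \<le> real (deg (P i) + deg (S i)))
    \<and> real (deg (P m) + deg (S m)) \<le> \<gamma>"

lemma good_cong: "lang W = lang W' \<Longrightarrow> good \<gamma> W m P S \<Longrightarrow> good \<gamma> W' m P S"
  by (simp add: good_def)

lemma shift':
  assumes "good \<gamma> B1 m' P' S'" "homogeneous X" "homogeneous Y" "\<gamma> \<le> real (deg X + deg Y)"
  shows "\<exists>P S. good \<gamma> (Concat X (Concat B1 Y)) (m'+1) P S"
  using shift[of m' P' S' B1 \<gamma> X Y] assms unfolding good_def by auto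

lemma G:
  assumes "log_product B" "\<gamma> \<ge> 1"
  shows "\<And>U V. homogeneous U \<Longrightarrow> homogeneous V \<Longrightarrow> real (deg U + deg V) < \<gamma> \<Longrightarrow>
    \<exists>m P S. 2^m * \<gamma> \<ge> real (deg B + deg U + deg V) + \<gamma> \<and> good \<gamma> (Concat U (Concat B V)) m P S"
  using assms(1)
proof (induction rule: log_product.induct)
  case (letter a)
  have hUa: "homogeneous (Concat U (Letter a))" "deg (Concat U (Letter a)) = deg U + 1"
    using hom_Concat[OF letter(1), of "Letter a"] by auto
  show ?case
  proof (cases "real (deg U + deg V) + 1 \<le> \<gamma>")
    case True
    show ?thesis
      apply (rule exI[of _ 1], rule exI[of _ "\<lambda>_. Concat U (Letter a)"], rule exI[of _ "\<lambda>_. V"])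
      using True hUa letter by (simp add: good_def)
  next
    case False
    show ?thesis
      apply (rule exI[of _ 2], rule exI[of _ "\<lambda>i. if i = 1 then Concat U (Letter a) else Eps"],
             rule exI[of _ "\<lambda>i. if i = 1 then V else Eps"])
      using False hUa letter assms(2) by (simp add: good_def numeral_2_eq_2 upt_rec)
  qed
next
  case (left B1 B2)
  have hV': "homogeneous (Concat B2 V)" "deg (Concat B2 V) = deg B2 + deg V"
    using hom_Concat[OF left(3) left.prems(2)] by auto
  have dB: "deg (Concat B1 B2) = deg B1 + deg B2" using hom_Concat[OF left(2,3)] by simp
  have L: "lang (Concat U (Concat (Concat B1 B2) V)) = lang (Concat U (Concat B1 (Concat B2 V)))" by simp
  show ?case
  proof (cases "real (deg U + deg (Concat B2 V)) < \<gamma>")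
    case True
    from left.IH[OF left.prems(1) hV'(1) True] obtain m P S where
      "real (deg B1 + deg U + deg (Concat B2 V)) + \<gamma> \<le> 2 ^ m * \<gamma>"
      "good \<gamma> (Concat U (Concat B1 (Concat B2 V))) m P S" by blast
    then show ?thesis using good_cong[OF L[symmetric]] hV' dB
      by (intro exI[of _ m] exI[of _ P] exI[of _ S]) (simp add: algebra_simps)
  next
    case False
    from left.IH[of Eps Eps] assms(2) obtain m P S where
      m: "real (deg B1) + \<gamma> \<le> 2 ^ m * \<gamma>" "good \<gamma> (Concat Eps (Concat B1 Eps)) m P S" by auto
    have "good \<gamma> B1 m P S" using good_cong[OF _ m(2)] by simp
    from shift'[OF this left.prems(1) hV'(1)] False obtain P2 S2 where
      g: "good \<gamma> (Concat U (Concat B1 (Concat B2 V))) (m+1) P2 S2" by auto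
    have "real (deg (Concat B1 B2) + deg U + deg V) + \<gamma> \<le> 2 ^ (m+1) * \<gamma>"
      using m(1) dB left(4) left.prems(3) by simp
    then show ?thesis using good_cong[OF L[symmetric] g] by blast
  qed
next
  case (right B1 B2)
  have hU': "homogeneous (Concat U B2)" "deg (Concat U B2) = deg U + deg B2"
    using hom_Concat[OF right.prems(1) right(3)] by auto
  have dB: "deg (Concat B2 B1) = deg B1 + deg B2" using hom_Concat[OF right(3,2)] by simp
  have L: "lang (Concat U (Concat (Concat B2 B1) V)) = lang (Concat (Concat U B2) (Concat B1 V))" by simp
  show ?case
  proof (cases "real (deg (Concat U B2) + deg V) < \<gamma>")
    case True
    from right.IH[OF hU'(1) right.prems(2) True] obtain m P S where
      "real (deg B1 + deg (Concat U B2) + deg V) + \<gamma> \<le> 2 ^ m * \<gamma>"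
      "good \<gamma> (Concat (Concat U B2) (Concat B1 V)) m P S" by blast
    then show ?thesis using good_cong[OF L[symmetric]] hU' dB
      by (intro exI[of _ m] exI[of _ P] exI[of _ S]) (simp add: algebra_simps)
  next
    case False
    from right.IH[of Eps Eps] assms(2) obtain m P S where
      m: "real (deg B1) + \<gamma> \<le> 2 ^ m * \<gamma>" "good \<gamma> (Concat Eps (Concat B1 Eps)) m P S" by auto
    have "good \<gamma> B1 m P S" using good_cong[OF _ m(2)] by simp
    from shift'[OF this hU'(1) right.prems(2)] False obtain P2 S2 where
      g: "good \<gamma> (Concat (Concat U B2) (Concat B1 V)) (m+1) P2 S2" by auto
    have "real (deg (Concat B2 B1) + deg U + deg V) + \<gamma> \<le> 2 ^ (m+1) * \<gamma>"
      using m(1) dB right(4) right.prems(3) by simp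
    then show ?thesis using good_cong[OF L[symmetric] g] by blast
  qed
qed

theorem proposition6p7:
  fixes B :: "'a rexp" and n :: nat and \<gamma> :: real
  assumes "log_product B" and "deg B = n" and "\<gamma> \<ge> 1"
  shows "\<exists>(m::nat) (P::nat \<Rightarrow> 'a rexp) (S::nat \<Rightarrow> 'a rexp).
           real m \<ge> log 2 (1 + real n / \<gamma>)
         \<and> (\<forall>i\<in>{1..m}. homogeneous (P i) \<and> homogeneous (S i))
         \<and> B \<equiv>\<^sub>r prod_rexp (map P [1..<m+1] @ map S (rev [1..<m+1]))
         \<and> (\<forall>i\<in>{1..<m}. real (deg (P i) + deg (S i)) \<ge> \<gamma>)
         \<and> real (deg (P m) + deg (S m)) \<le> \<gamma>"
proof -
  from G[OF assms(1,3), of Eps Eps] assms(3) obtain m P S where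
    m: "real n + \<gamma> \<le> 2 ^ m * \<gamma>" "good \<gamma> (Concat Eps (Concat B Eps)) m P S"
    using assms(2) by auto
  have "1 + real n / \<gamma> \<le> 2 ^ m"
    using m(1) assms(3) by (simp add: field_simps)
  then have "log 2 (1 + real n / \<gamma>) \<le> log 2 (2 ^ m)"
    using assms(3) by (subst log_le_cancel_iff) (auto intro: add_pos_nonneg)
  then have lg: "log 2 (1 + real n / \<gamma>) \<le> real m" by simp
  show ?thesis
    apply (rule exI[of _ m], rule exI[of _ P], rule exI[of _ S])
    using lg m(2) by (simp add: good_def equiv_rexp_def)
qed

end
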